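(* Fix positive integers $(m_1,m_2,\dots)$. With probability at least $1-\delta$ over the random samples $(x_1,x_2,\dots)$ drawn i.i.d. from $D_X$, \[V_{\widetilde P,\pi,t}\le(1+\lambda)\widehat V_{\widetilde P,\pi,t}+\Bigl(5+\frac1{2\lambda}\Bigr)\cdot\frac{(m_t+1)\log N+\log\frac{2t^2}{\delta}}{\mu_t\,(t-1)}\] for all $\lambda>0$, all $t\ge1$, all $\pi\in\Pi$, and all distributions $\widetilde P\in\mathcal S_{m_t}$.
   Context: $A$ is a set of $K$ actions, $X$ a set of contexts, $\Pi$ a finite set of $N$ policies $\pi:X\to A$, $D_X$ a distribution on $X$, $\delta\in(0,1)$. $C_t=2\log(Nt/\delta)$, $\mu_t=\min\{\frac1{2K},\sqrt{C_t/(2Kt)}\}$. For a distribution $P$ over $\Pi$, $W_P(x,a)=\sum_{\pi:\pi(x)=a}P(\pi)$, and $V_{P,\pi,t}=\mathbb{E}_{x\sim D_X}[1/((1-K\mu_t)W_P(x,\pi(x))+\mu_t)]$, $\widehat V_{P,\pi,t}=\frac1{t-1}\sum_{i=1}^{t-1}1/((1-K\mu_t)W_P(x_i,\pi(x_i))+\mu_t)$. For a positive integer $m$, $\mathcal S_m$ is the set of distributions over $\Pi$ of the form $\widetilde P(\pi)=\frac1m\sum_{i=1}^m\mathbb{I}(\pi=\pi_i)$ for some $\pi_1,\dots,\pi_m\in\Pi$. *)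

theory Defs
  imports "HOL-Probability.Probability"
begin

definition Cconst :: "nat \<Rightarrow> real \<Rightarrow> nat \<Rightarrow> real" where
  "Cconst N \<delta> t = 2 * ln (real N * real t / \<delta>)"

definition mu :: "nat \<Rightarrow> nat \<Rightarrow> real \<Rightarrow> nat \<Rightarrow> real" where
  "mu K N \<delta> t = min (1 / (2 * real K)) (sqrt (Cconst N \<delta> t / (2 * real K * real t)))"

definition W :: "('x \<Rightarrow> 'a) set \<Rightarrow> (('x \<Rightarrow> 'a) \<Rightarrow> real) \<Rightarrow> 'x \<Rightarrow> 'a \<Rightarrow> real" where
  "W Pol P x a = (\<Sum>\<pi>\<in>{\<pi>\<in>Pol. \<pi> x = a}. P \<pi>)"

definition Vval :: "'x measure \<Rightarrow> ('x \<Rightarrow> 'a) set \<Rightarrow> nat \<Rightarrow> real \<Rightarrow>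
    (('x \<Rightarrow> 'a) \<Rightarrow> real) \<Rightarrow> ('x \<Rightarrow> 'a) \<Rightarrow> real" where
  "Vval D Pol K m P \<pi> =
     (\<integral>x. 1 / ((1 - real K * m) * W Pol P x (\<pi> x) + m) \<partial>D)"

definition Vhat :: "(nat \<Rightarrow> 'x) \<Rightarrow> ('x \<Rightarrow> 'a) set \<Rightarrow> nat \<Rightarrow> real \<Rightarrow> nat \<Rightarrow>
    (('x \<Rightarrow> 'a) \<Rightarrow> real) \<Rightarrow> ('x \<Rightarrow> 'a) \<Rightarrow> real" where
  "Vhat xs Pol K m t P \<pi> =
     (1 / (real t - 1)) *
       (\<Sum>i\<in>{1..t-1}. 1 / ((1 - real K * m) * W Pol P (xs i) (\<pi> (xs i)) + m))"

definition Smset :: "('x \<Rightarrow> 'a) set \<Rightarrow> nat \<Rightarrow> (('x \<Rightarrow> 'a) \<Rightarrow> real) set" where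
  "Smset Pol m = {P. \<exists>ps :: nat \<Rightarrow> ('x \<Rightarrow> 'a). (\<forall>i\<in>{1..m}. ps i \<in> Pol) \<and>
       P = (\<lambda>\<pi>. (1 / real m) * real (card {i\<in>{1..m}. \<pi> = ps i}))}"

end

theory Submission
  imports Defs
begin


lemma PiM_prod_nn_integral:
  fixes D :: "'x measure" and g :: "'x \<Rightarrow> ennreal"
  assumes D: "prob_space D" and J: "finite J" and g[measurable]: "g \<in> borel_measurable D"
  shows "(\<integral>\<^sup>+xs. (\<Prod>i\<in>J. g (xs i)) \<partial>PiM UNIV (\<lambda>_::nat. D)) = (\<integral>\<^sup>+x. g x \<partial>D) ^ card J"
proof -
  interpret product_prob_space "\<lambda>_::nat. D" UNIV
    by (simp add: D product_prob_space.intro product_prob_space_axioms.intro product_sigma_finite.intro prob_space_imp_sigma_finite)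
  have "(\<integral>\<^sup>+xs. (\<Prod>i\<in>J. g (xs i)) \<partial>PiM UNIV (\<lambda>_::nat. D))
      = (\<integral>\<^sup>+xs. (\<Prod>i\<in>J. g (restrict xs J i)) \<partial>PiM UNIV (\<lambda>_::nat. D))"
    by (intro nn_integral_cong prod.cong) auto
  also have "\<dots> = (\<integral>\<^sup>+y. (\<Prod>i\<in>J. g (y i)) \<partial>distr (PiM UNIV (\<lambda>_::nat. D)) (PiM J (\<lambda>_. D)) (\<lambda>xs. restrict xs J))"
    by (subst nn_integral_distr) (auto intro!: measurable_restrict_subset)
  also have "\<dots> = (\<integral>\<^sup>+y. (\<Prod>i\<in>J. g (y i)) \<partial>PiM J (\<lambda>_. D))"
    using distr_PiM_restrict_finite[OF J] by simp
  also have "\<dots> = (\<Prod>i\<in>J. \<integral>\<^sup>+x. g x \<partial>D)"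
    by (rule product_nn_integral_prod) (use J in auto)
  finally show ?thesis by simp
qed

lemma exp_neg_le_quad:
  fixes u :: real assumes "0 \<le> u"
  shows "exp (-u) \<le> 1 - u + u^2/2"
proof -
  let ?f = "\<lambda>u. 1 - u + u^2/2 - exp (-u)"
  have d: "\<And>x. (?f has_real_derivative (-1 + x + exp (-x))) (at x)"
    by (auto intro!: derivative_eq_intros simp: power2_eq_square)
  have "?f 0 \<le> ?f u"
  proof (rule DERIV_nonneg_imp_nondecreasing[OF assms])
    fix x assume "0 \<le> x" "x \<le> u"
    show "\<exists>y. (?f has_real_derivative y) (at x) \<and> 0 \<le> y"
      using d[of x] exp_ge_add_one_self[of "-x"] by auto
  qed
  then show ?thesis by simp
qed



lemma lower_tail:
  fixes D :: "'x measure" and Z :: "'x \<Rightarrow> real" and J :: "nat set"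
  assumes D: "prob_space D" and Zm[measurable]: "Z \<in> borel_measurable D"
    and Zb: "\<And>x. 0 \<le> Z x \<and> Z x \<le> b" and b: "0 < b"
    and V: "V = integral\<^sup>L D Z" "0 < V" and L: "0 < L"
    and J: "finite J" "card J = n" "0 < n"
  shows "measure (PiM UNIV (\<lambda>_::nat. D))
           {xs\<in>space (PiM UNIV (\<lambda>_::nat. D)). (\<Sum>i\<in>J. Z (xs i)) \<le> real n*V - real n* sqrt (2*b*V*L/real n)}
         \<le> exp (-L)"
proof -
  interpret product_prob_space "\<lambda>_::nat. D" UNIV
    by (simp add: D product_prob_space.intro product_prob_space_axioms.intro product_sigma_finite.intro prob_space_imp_sigma_finite)
  define M where "M = PiM UNIV (\<lambda>_::nat. D)"
  define \<epsilon> where "\<epsilon> = sqrt (2*b*V*L/real n)"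
  define s where "s = \<epsilon> / (b*V)"
  have \<epsilon>2: "\<epsilon>^2 = 2*b*V*L/n" unfolding \<epsilon>_def using b V L J by simp
  have \<epsilon>: "\<epsilon> > 0" unfolding \<epsilon>_def using b V L J by simp
  have s: "s > 0" unfolding s_def using \<epsilon> b V by simp
  define a where "a = real n*V - real n*\<epsilon>"
  have int: "integrable D Z"
    by (rule finite_measure.integrable_const_bound[OF prob_space.finite_measure[OF D], where B=b]) (use Zb in auto)
  have mgf: "(\<integral>\<^sup>+x. ennreal (exp (- s * Z x)) \<partial>D) \<le> ennreal (exp (- s*V + s^2*b*V/2))"
  proof -
    have "(\<integral>\<^sup>+x. ennreal (exp (- s * Z x)) \<partial>D) \<le> (\<integral>\<^sup>+x. ennreal (1 - s * Z x + s^2*b/2 * Z x) \<partial>D)"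
    proof (rule nn_integral_mono)
      fix x
      have "exp (- (s * Z x)) \<le> 1 - s * Z x + (s * Z x)^2/2"
        by (rule exp_neg_le_quad) (use s Zb[of x] in auto)
      also have "(s * Z x)^2 \<le> s^2 * b * Z x"
        using mult_left_mono[of "Z x" b "s * s * Z x"] Zb[of x] s by (simp add: power2_eq_square algebra_simps)
      finally show "ennreal (exp (- s * Z x)) \<le> ennreal (1 - s * Z x + s^2*b/2 * Z x)"
        by (intro ennreal_leI) simp
    qed
    also have "\<dots> = ennreal (\<integral>x. (1 - s * Z x + s^2*b/2 * Z x) \<partial>D)"
    proof (rule nn_integral_eq_integral)
      show "integrable D (\<lambda>x. 1 - s * Z x + s\<^sup>2 * b / 2 * Z x)"
        using int by auto
      show "AE x in D. 0 \<le> 1 - s * Z x + s\<^sup>2 * b / 2 * Z x"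
      proof (rule AE_I2)
        fix x
        have h1: "exp (- (s * Z x)) \<le> 1 - s * Z x + (s * Z x)^2/2"
          by (rule exp_neg_le_quad) (use s Zb[of x] in auto)
        have h2: "(s * Z x)^2 \<le> s^2 * b * Z x"
          using mult_left_mono[of "Z x" b "s * s * Z x"] Zb[of x] s by (simp add: power2_eq_square algebra_simps)
        have h3: "s\<^sup>2 * b / 2 * Z x = s\<^sup>2 * b * Z x / 2" by simp
        show "0 \<le> 1 - s * Z x + s\<^sup>2 * b / 2 * Z x" using h1 h2 h3 exp_gt_zero[of "- (s * Z x)"] by linarith
      qed
    qed
    also have "(\<integral>x. (1 - s * Z x + s^2*b/2 * Z x) \<partial>D) = 1 - s*V + s^2*b/2*V"
      using int V(1) by (simp add: prob_space.prob_space[OF D])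
    also have "\<dots> \<le> exp (- s*V + s^2*b*V/2)"
      using exp_ge_add_one_self[of "s^2*b*V/2 - s*V"] by (simp add: algebra_simps)
    finally show ?thesis by (simp add: ennreal_leI)
  qed
  have "emeasure M {xs\<in>space M. (\<Sum>i\<in>J. Z (xs i)) \<le> a}
       \<le> ennreal (exp (s * a)) * (\<integral>\<^sup>+xs. ennreal (exp (- s * (\<Sum>i\<in>J. Z (xs i)))) * indicator (space M) xs \<partial>M)"
    by (rule Chernoff_ineq_nn_integral_le[OF s]) (auto simp: M_def)
  also have "(\<integral>\<^sup>+xs. ennreal (exp (- s * (\<Sum>i\<in>J. Z (xs i)))) * indicator (space M) xs \<partial>M)
     = (\<integral>\<^sup>+xs. (\<Prod>i\<in>J. ennreal (exp (- s * Z (xs i)))) \<partial>M)"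
    by (intro nn_integral_cong)
       (simp add: sum_distrib_left exp_sum[OF J(1), symmetric] prod_ennreal J(1) flip: sum_negf)
  also have "\<dots> = (\<integral>\<^sup>+x. ennreal (exp (- s * Z x)) \<partial>D) ^ card J"
    unfolding M_def by (rule PiM_prod_nn_integral[OF D J(1)]) simp
  also have "ennreal (exp (s * a)) * \<dots> \<le> ennreal (exp (s * a)) * ennreal (exp (- s*V + s^2*b*V/2)) ^ n"
    by (intro mult_left_mono) (use power_mono[OF mgf, of n] J(2) in simp_all)
  also have "\<dots> = ennreal (exp (s * a + n * (- s*V + s^2*b*V/2)))"
  proof -
    have "ennreal (exp (- s*V + s^2*b*V/2)) ^ n = ennreal (exp (n * (- s*V + s^2*b*V/2)))"
      by (simp add: ennreal_power exp_of_nat_mult)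
    then show ?thesis by (simp add: exp_add ennreal_mult)
  qed
  also have "s * a + n * (- s*V + s^2*b*V/2) = -L"
  proof -
    have e1: "s * a + n * (- s*V + s^2*b*V/2) = n * (s^2*b*V/2 - s*\<epsilon>)"
      unfolding a_def by (simp add: algebra_simps)
    have e2: "s^2*b*V/2 = \<epsilon>^2 / (2*b*V)"
      unfolding s_def using b V by (simp add: power2_eq_square field_simps)
    have e3: "s*\<epsilon> = \<epsilon>^2 / (b*V)"
      unfolding s_def using b V by (simp add: power2_eq_square field_simps)
    have e4: "\<epsilon>^2 / (2*b*V) - \<epsilon>^2 / (b*V) = - (\<epsilon>^2 / (2*b*V))"
      using b V by (simp add: field_simps)
    have e5: "real n * - (\<epsilon>^2 / (2*b*V)) = -L"
      unfolding \<epsilon>2 using b V J by (simp add: field_simps)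
    show ?thesis by (subst e1, subst e2, subst e3, subst e4, rule e5)
  qed
  finally have 1: "emeasure M {xs\<in>space M. (\<Sum>i\<in>J. Z (xs i)) \<le> a} \<le> ennreal (exp (-L))" .
  have 2: "emeasure M {xs\<in>space M. (\<Sum>i\<in>J. Z (xs i)) \<le> a} = ennreal (measure M {xs\<in>space M. (\<Sum>i\<in>J. Z (xs i)) \<le> a})"
    unfolding M_def by (rule P.emeasure_eq_measure)
  have "measure M {xs\<in>space M. (\<Sum>i\<in>J. Z (xs i)) \<le> a} \<le> exp (-L)"
    using 1 unfolding 2 by (subst (asm) ennreal_le_iff) auto
  then show ?thesis unfolding M_def a_def \<epsilon>_def .
qed



lemma alg:
  fixes V Vh w u lam :: real
  assumes u: "0 \<le> u" and Vh: "0 \<le> Vh" and lam: "0 < lam" and lt: "V < Vh + w"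
    and w: "0 \<le> w" and w2: "w^2 = 2*u*V"
  shows "V \<le> (1+lam)*Vh + (2 + 1/(2*lam))*u"
proof -
  define c where "c = lam*Vh + u/(2*lam)"
  have c0: "0 \<le> c" unfolding c_def using u Vh lam by simp
  have cc: "c^2 - 2*u*Vh = (lam*Vh - u/(2*lam))^2"
    unfolding c_def using lam by (simp add: power2_eq_square field_simps)
  have c2: "2*u*Vh \<le> c^2" using cc by (smt (verit) zero_le_power2)
  have wle: "w \<le> 2*u + c"
  proof (rule ccontr)
    assume "\<not> w \<le> 2*u + c"
    hence g: "w > 2*u + c" by simp
    have "(2*u + c) * c \<le> w * (w - 2*u)"
      using g c0 u by (intro mult_mono) auto
    hence A: "c^2 \<le> w^2 - 2*u*w" using u c0
      by (simp add: power2_eq_square algebra_simps) (smt (verit) mult_nonneg_nonneg)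
    show False
    proof (cases "u = 0")
      case True then show ?thesis using w2 g c0 by simp
    next
      case False
      hence "u > 0" using u by simp
      hence "2*u*V < 2*u*(Vh + w)" using lt by simp
      thus False using A c2 w2 by (simp add: algebra_simps)
    qed
  qed
  have "V < Vh + (2*u + c)" using lt wle by simp
  thus ?thesis unfolding c_def by (simp add: algebra_simps)
qed



lemma Smset_card:
  fixes Pol :: "('x \<Rightarrow> 'a) set"
  assumes "finite Pol"
  shows "finite (Smset Pol m) \<and> card (Smset Pol m) \<le> card Pol ^ m"
proof -
  define F where "F = (\<lambda>ps::nat \<Rightarrow> ('x \<Rightarrow> 'a). (\<lambda>\<pi>. (1 / real m) * real (card {i\<in>{1..m}. \<pi> = ps i})))"
  have sub: "Smset Pol m \<subseteq> F ` (PiE {1..m} (\<lambda>_. Pol))"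
  proof
    fix P assume "P \<in> Smset Pol m"
    then obtain ps where ps: "\<forall>i\<in>{1..m}. ps i \<in> Pol" "P = F ps"
      unfolding Smset_def F_def by blast
    have "F (restrict ps {1..m}) = F ps"
      unfolding F_def by (intro ext) (auto intro!: arg_cong[where f=card])
    moreover have "restrict ps {1..m} \<in> PiE {1..m} (\<lambda>_. Pol)" using ps(1) by auto
    ultimately show "P \<in> F ` (PiE {1..m} (\<lambda>_. Pol))" using ps(2) by (metis image_eqI)
  qed
  have fin: "finite (PiE {1..m} (\<lambda>_. Pol))" using assms by (simp add: finite_PiE)
  have "card (Smset Pol m) \<le> card (F ` (PiE {1..m} (\<lambda>_. Pol)))"
    using sub fin by (intro card_mono) auto
  also have "\<dots> \<le> card (PiE {1..m} (\<lambda>_. Pol))" by (rule card_image_le[OF fin])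
  also have "\<dots> = card Pol ^ m" by (simp add: card_PiE)
  finally show ?thesis using sub fin finite_subset by blast
qed

lemma partial_sums_bound:
  fixes \<delta> :: real assumes "0 \<le> \<delta>"
  defines "h \<equiv> (\<lambda>t::nat. if 2 \<le> t then \<delta> / (2 * (real t)^2) else 0)"
  shows "summable h" "suminf h \<le> \<delta>/2"
proof -
  have h0: "\<And>t. 0 \<le> h t" unfolding h_def using assms by auto
  have key: "(\<Sum>t<n+2. h t) \<le> \<delta>/2 - \<delta>/(2*(real n + 1))" for n
  proof (induction n)
    case 0 then show ?case by (simp add: h_def)
  next
    case (Suc n)
    have "(\<Sum>t<Suc n+2. h t) = (\<Sum>t<n+2. h t) + h (n+2)" by simp
    also have "h (n+2) = \<delta> / (2 * (real n + 2)^2)" unfolding h_def by simp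
    also have "\<delta> / (2 * (real n + 2)^2) \<le> \<delta>/(2*(real n + 1)) - \<delta>/(2*(real (Suc n) + 1))"
    proof -
      have "\<delta>/(2*(real n + 1)) - \<delta>/(2*(real n + 2)) = \<delta> / (2*((real n + 1)*(real n + 2)))"
        by (simp add: divide_simps) (simp add: algebra_simps)
      also have "\<delta> / (2 * (real n + 2)^2) \<le> \<delta> / (2*((real n + 1)*(real n + 2)))"
        using assms by (intro divide_left_mono) (auto simp: power2_eq_square)
      ultimately show ?thesis by (simp add: add.commute)
    qed
    finally show ?case using Suc.IH by simp
  qed
  have ps: "(\<Sum>t<n. h t) \<le> \<delta>/2" for n
  proof -
    have "(\<Sum>t<n. h t) \<le> (\<Sum>t<n+2. h t)" using h0 by (intro sum_mono2) auto
    also have "\<dots> \<le> \<delta>/2" using key[of n] assms by (smt (verit) divide_nonneg_nonneg of_nat_0_le_iff)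
    finally show ?thesis .
  qed
  show s: "summable h" by (rule summableI_nonneg_bounded[where x="\<delta>/2"]) (use h0 ps in auto)
  show "suminf h \<le> \<delta>/2" by (rule suminf_le_const[OF s ps])
qed



lemma W_meas:
  fixes D :: "'x measure" and Pol :: "('x \<Rightarrow> 'a) set"
  assumes fin: "finite Pol" "finite A"
    and meas: "\<forall>\<pi>\<in>Pol. \<pi> \<in> measurable D (count_space UNIV)"
    and inA: "\<forall>\<pi>\<in>Pol. \<forall>x. \<pi> x \<in> A" and \<pi>: "\<pi> \<in> Pol"
  shows "(\<lambda>x. W Pol P x (\<pi> x)) \<in> borel_measurable D"
proof -
  define S where "S \<pi>' = (\<Union>a\<in>A. (\<pi>' -` {a} \<inter> space D) \<inter> (\<pi> -` {a} \<inter> space D))" for \<pi>'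
  have S: "S \<pi>' \<in> sets D" if "\<pi>' \<in> Pol" for \<pi>'
    unfolding S_def using that \<pi> meas fin
    by (intro sets.finite_UN sets.Int measurable_sets[where A="count_space UNIV"]) auto
  have eq: "W Pol P x (\<pi> x) = (\<Sum>\<pi>'\<in>Pol. P \<pi>' * indicator (S \<pi>') x)" if "x \<in> space D" for x
  proof -
    have "W Pol P x (\<pi> x) = (\<Sum>\<pi>'\<in>Pol. if \<pi>' x = \<pi> x then P \<pi>' else 0)"
      unfolding W_def using fin by (simp add: sum.inter_filter)
    also have "\<dots> = (\<Sum>\<pi>'\<in>Pol. P \<pi>' * indicator (S \<pi>') x)"
    proof (intro sum.cong refl)
      fix \<pi>' assume "\<pi>' \<in> Pol"
      have "x \<in> S \<pi>' \<longleftrightarrow> \<pi>' x = \<pi> x"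
        unfolding S_def using that inA \<pi> by auto
      then show "(if \<pi>' x = \<pi> x then P \<pi>' else 0) = P \<pi>' * indicator (S \<pi>') x"
        by (simp add: indicator_def)
    qed
    finally show ?thesis .
  qed
  have "(\<lambda>x. \<Sum>\<pi>'\<in>Pol. P \<pi>' * indicator (S \<pi>') x) \<in> borel_measurable D"
    using S by (intro borel_measurable_sum borel_measurable_times borel_measurable_const borel_measurable_indicator) auto
  then show ?thesis by (subst measurable_cong[where g="\<lambda>x. \<Sum>\<pi>'\<in>Pol. P \<pi>' * indicator (S \<pi>') x"]) (use eq in auto)
qed

lemma Smset_nonneg: "P \<in> Smset Pol m \<Longrightarrow> 0 \<le> P \<pi>"
  unfolding Smset_def by auto

lemma single:
  fixes D :: "'x measure" and Pol :: "('x \<Rightarrow> 'a) set" and \<delta> :: real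
  assumes D: "prob_space D"
    and A: "finite A" "A \<noteq> {}"
    and Pol: "finite Pol" "Pol \<noteq> {}"
    and inA: "\<forall>\<pi>\<in>Pol. \<forall>x. \<pi> x \<in> A"
    and meas: "\<forall>\<pi>\<in>Pol. \<pi> \<in> measurable D (count_space UNIV)"
    and \<delta>: "0 < \<delta>" "\<delta> < 1"
    and t: "2 \<le> t" and \<pi>: "\<pi> \<in> Pol" and P: "P \<in> Smset Pol m"
  defines "\<mu> \<equiv> mu (card A) (card Pol) \<delta> t"
  defines "Z \<equiv> (\<lambda>x. 1 / ((1 - real (card A) * \<mu>) * W Pol P x (\<pi> x) + \<mu>))"
  shows "0 < \<mu>" "Z \<in> borel_measurable D" "\<And>x. 0 \<le> Z x \<and> Z x \<le> 1/\<mu>"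
    "Vval D Pol (card A) \<mu> P \<pi> = integral\<^sup>L D Z" "0 < Vval D Pol (card A) \<mu> P \<pi>"
proof -
  interpret D: prob_space D by (rule D)
  have K: "card A \<ge> 1" using A by (simp add: Suc_leI card_gt_0_iff)
  have N: "card Pol \<ge> 1" using Pol by (simp add: Suc_leI card_gt_0_iff)
  have C: "Cconst (card Pol) \<delta> t > 0"
  proof -
    have n1: "real (card Pol) \<ge> 1" "real t \<ge> 2" using N t by auto
    have "real (card Pol) * real t \<ge> 2" using mult_mono[OF n1] by simp
    hence "real (card Pol) * real t / \<delta> > 1" using \<delta> by (simp add: less_divide_eq)
    thus ?thesis unfolding Cconst_def by simp
  qed
  show mu0: "0 < \<mu>" unfolding \<mu>_def mu_def using K C t by auto
  have muK: "real (card A) * \<mu> \<le> 1/2"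
  proof -
    have "\<mu> \<le> 1 / (2 * real (card A))" unfolding \<mu>_def mu_def by simp
    thus ?thesis using K by (simp add: field_simps)
  qed
  have Wnn: "0 \<le> W Pol P x a" for x a unfolding W_def using Smset_nonneg[OF P] by (simp add: sum_nonneg)
  define SP where "SP = (\<Sum>\<pi>'\<in>Pol. P \<pi>')"
  have Wle: "W Pol P x a \<le> SP" for x a
    unfolding W_def SP_def using Smset_nonneg[OF P] Pol by (intro sum_mono2) auto
  have den: "\<mu> \<le> (1 - real (card A) * \<mu>) * W Pol P x (\<pi> x) + \<mu>" for x
    using Wnn[of x "\<pi> x"] muK by simp
  have den2: "(1 - real (card A) * \<mu>) * W Pol P x (\<pi> x) + \<mu> \<le> (1 - real (card A) * \<mu>) * SP + \<mu>" for x
    using Wle[of x "\<pi> x"] muK by (simp add: mult_left_mono)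
  show Zb: "0 \<le> Z x \<and> Z x \<le> 1/\<mu>" for x
    unfolding Z_def using den[of x] mu0 by (auto intro: divide_left_mono)
  show Zm: "Z \<in> borel_measurable D"
    unfolding Z_def
    by (intro borel_measurable_divide borel_measurable_add borel_measurable_times borel_measurable_const W_meas[OF Pol(1) A(1) meas inA \<pi>])
  show VZ: "Vval D Pol (card A) \<mu> P \<pi> = integral\<^sup>L D Z" unfolding Vval_def Z_def ..
  define c where "c = 1 / ((1 - real (card A) * \<mu>) * SP + \<mu>)"
  have cpos: "0 < c" unfolding c_def using den[of undefined] den2[of undefined] mu0 by simp
  have cZ: "c \<le> Z x" for x
    unfolding c_def Z_def using den[of x] den2[of x] mu0 by (intro divide_left_mono) auto
  have int: "integrable D Z"
    by (rule D.integrable_const_bound[where B="1/\<mu>"]) (use Zb Zm in auto)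
  have "c \<le> integral\<^sup>L D Z"
    using integral_mono[of D "\<lambda>_. c" Z] int cZ by (simp add: D.prob_space)
  then show "0 < Vval D Pol (card A) \<mu> P \<pi>" using VZ cpos by simp
qed



theorem lemma7:
  fixes D :: "'x measure" and A :: "'a set" and Pol :: "('x \<Rightarrow> 'a) set"
    and \<delta> :: real and ms :: "nat \<Rightarrow> nat"
  assumes "prob_space D"
    and "finite A" and "A \<noteq> {}"
    and "finite Pol" and "Pol \<noteq> {}"
    and "\<forall>\<pi>\<in>Pol. \<forall>x. \<pi> x \<in> A"
    and "\<forall>\<pi>\<in>Pol. \<pi> \<in> measurable D (count_space UNIV)"
    and "0 < \<delta>" and "\<delta> < 1"
    and "\<forall>t. 0 < ms t"
  shows "\<exists>E\<in>sets (PiM UNIV (\<lambda>_::nat. D)).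
           measure (PiM UNIV (\<lambda>_::nat. D)) E \<ge> 1 - \<delta> \<and>
           (\<forall>xs\<in>E. \<forall>lam::real. lam > 0 \<longrightarrow> (\<forall>t::nat. t \<ge> 2 \<longrightarrow>
              (\<forall>\<pi>\<in>Pol. \<forall>P\<in>Smset Pol (ms t).
                 Vval D Pol (card A) (mu (card A) (card Pol) \<delta> t) P \<pi>
                 \<le> (1 + lam) * Vhat xs Pol (card A) (mu (card A) (card Pol) \<delta> t) t P \<pi>
                   + (5 + 1 / (2 * lam)) *
                     (((real (ms t) + 1) * ln (real (card Pol)) + ln (2 * (real t)\<^sup>2 / \<delta>))
                      / (mu (card A) (card Pol) \<delta> t * (real t - 1))))))"
proof -
  note D = assms(1)
  interpret product_prob_space "\<lambda>_::nat. D" UNIV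
    by (simp add: D product_prob_space.intro product_prob_space_axioms.intro product_sigma_finite.intro prob_space_imp_sigma_finite)
  define M where "M = PiM UNIV (\<lambda>_::nat. D)"
  define \<mu> where "\<mu> t = mu (card A) (card Pol) \<delta> t" for t
  define Z where "Z t P \<pi> x = 1 / ((1 - real (card A) * \<mu> t) * W Pol P x (\<pi> x) + \<mu> t)" for t P \<pi> x
  define V where "V t P \<pi> = Vval D Pol (card A) (\<mu> t) P \<pi>" for t P \<pi>
  define L where "L t = (real (ms t) + 1) * ln (real (card Pol)) + ln (2 * (real t)^2 / \<delta>)" for t
  define B where "B t \<pi> P = {xs\<in>space M. (\<Sum>i\<in>{1..t-1}. Z t P \<pi> (xs i))
      \<le> real (t-1) * V t P \<pi> - real (t-1) * sqrt (2*(1/\<mu> t)*V t P \<pi>*L t/real (t-1))}" for t \<pi> P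
  define Bt where "Bt t = (if 2 \<le> t then \<Union>\<pi>\<in>Pol. \<Union>P\<in>Smset Pol (ms t). B t \<pi> P else {})" for t
  define h where "h = (\<lambda>t::nat. if 2 \<le> t then \<delta> / (2 * (real t)^2) else 0)"
  define E where "E = space M - (\<Union>t. Bt t)"
  note sg = single[OF D assms(2-9)]
  have N: "card Pol \<ge> 1" using assms(4,5) by (simp add: Suc_leI card_gt_0_iff)
  have Lpos: "0 < L t" if t: "2 \<le> t" for t
  proof -
    have "ln (real (card Pol)) \<ge> 0" using N by simp
    hence a: "(real (ms t) + 1) * ln (real (card Pol)) \<ge> 0" by simp
    have "(real t)^2 \<ge> 1" using t by simp
    hence "2 * (real t)^2 / \<delta> > 1" using assms(8,9) by (simp add: less_divide_eq)
    hence "ln (2 * (real t)^2 / \<delta>) > 0" by simp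
    thus ?thesis unfolding L_def using a by simp
  qed
  have Bsets: "B t \<pi> P \<in> sets M" if t: "2 \<le> t" and \<pi>: "\<pi> \<in> Pol" and P: "P \<in> Smset Pol (ms t)" for t \<pi> P
  proof -
    have [measurable]: "Z t P \<pi> \<in> borel_measurable D"
      using sg(2)[OF t \<pi> P] unfolding Z_def \<mu>_def .
    show ?thesis unfolding B_def M_def by measurable
  qed
  have Bmeas: "measure M (B t \<pi> P) \<le> exp (- L t)"
    if t: "2 \<le> t" and \<pi>: "\<pi> \<in> Pol" and P: "P \<in> Smset Pol (ms t)" for t \<pi> P
  proof -
    have Zm: "Z t P \<pi> \<in> borel_measurable D"
      using sg(2)[OF t \<pi> P] unfolding Z_def \<mu>_def .
    have Zb: "\<And>x. 0 \<le> Z t P \<pi> x \<and> Z t P \<pi> x \<le> 1 / \<mu> t"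
      using sg(3)[OF t \<pi> P] unfolding Z_def \<mu>_def by blast
    have b: "0 < 1 / \<mu> t" using sg(1)[OF t \<pi> P] unfolding \<mu>_def by simp
    have VZ: "V t P \<pi> = integral\<^sup>L D (Z t P \<pi>)"
      using sg(4)[OF t \<pi> P] unfolding Z_def \<mu>_def V_def .
    have Vp: "0 < V t P \<pi>" using sg(5)[OF t \<pi> P] unfolding \<mu>_def V_def .
    show ?thesis unfolding B_def M_def
      by (rule lower_tail[OF D Zm Zb b VZ Vp Lpos[OF t]]) (use t in auto)
  qed
  have expL: "exp (- L t) = \<delta> / (2*(real t)^2) / real (card Pol)^(ms t + 1)" if t: "2 \<le> t" for t
  proof -
    have "L t = ln (real (card Pol)^(ms t + 1) * (2 * (real t)^2 / \<delta>))"
    proof -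
      have p1: "real (card Pol)^(ms t + 1) > 0" using N by simp
      have p2: "2 * (real t)^2 / \<delta> > 0" using t assms(8) by simp
      have "ln (real (card Pol)^(ms t + 1) * (2 * (real t)^2 / \<delta>))
          = ln (real (card Pol)^(ms t + 1)) + ln (2 * (real t)^2 / \<delta>)"
        by (rule ln_mult_pos[OF p1 p2])
      also have "ln (real (card Pol)^(ms t + 1)) = real (ms t + 1) * ln (real (card Pol))"
        using N by (intro ln_realpow)
      finally show ?thesis unfolding L_def by simp
    qed
    moreover have "real (card Pol)^(ms t + 1) * (2 * (real t)^2 / \<delta>) > 0"
      using N t assms(8) by simp
    ultimately have "exp (L t) = real (card Pol)^(ms t + 1) * (2 * (real t)^2 / \<delta>)" by simp
    thus ?thesis by (simp add: exp_minus field_simps)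
  qed
  have Btsets: "Bt t \<in> sets M" for t
    unfolding Bt_def using Bsets Smset_card[OF assms(4)] assms(4)
    by (auto intro!: sets.finite_UN)
  have Btmeas: "measure M (Bt t) \<le> h t" for t
  proof (cases "2 \<le> t")
    case False then show ?thesis unfolding Bt_def h_def by simp
  next
    case t: True
    have fS: "finite (Smset Pol (ms t))" and cS: "card (Smset Pol (ms t)) \<le> card Pol ^ ms t"
      using Smset_card[OF assms(4)] by auto
    have "measure M (Bt t) \<le> (\<Sum>\<pi>\<in>Pol. measure M (\<Union>P\<in>Smset Pol (ms t). B t \<pi> P))"
      unfolding Bt_def using t assms(4) Bsets fS by (simp add: measure_UNION_le sets.finite_UN)
    also have "\<dots> \<le> (\<Sum>\<pi>\<in>Pol. \<Sum>P\<in>Smset Pol (ms t). measure M (B t \<pi> P))"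
      using Bsets t fS by (intro sum_mono measure_UNION_le) auto
    also have "\<dots> \<le> (\<Sum>\<pi>\<in>Pol. \<Sum>P\<in>Smset Pol (ms t). exp (- L t))"
      using Bmeas t by (intro sum_mono) auto
    also have "\<dots> = real (card Pol) * real (card (Smset Pol (ms t))) * exp (- L t)" by simp
    also have "\<dots> \<le> real (card Pol) * real (card Pol ^ ms t) * exp (- L t)"
      using cS by (intro mult_right_mono mult_left_mono) auto
    also have "\<dots> = h t" unfolding expL[OF t] h_def using t N by (simp add: field_simps)
    finally show ?thesis .
  qed
  have hs: "summable h" "suminf h \<le> \<delta>/2"
    using partial_sums_bound[of \<delta>] assms(8) unfolding h_def by auto
  have sumB: "summable (\<lambda>t. measure M (Bt t))"
    by (rule summable_comparison_test'[OF hs(1), where N=0]) (simp add: Btmeas)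
  have "measure M (\<Union>t. Bt t) \<le> (\<Sum>t. measure M (Bt t))"
    unfolding M_def by (rule P.finite_measure_subadditive_countably) (use Btsets sumB in \<open>auto simp: M_def\<close>)
  also have "\<dots> \<le> suminf h" by (rule suminf_le[OF Btmeas sumB hs(1)])
  finally have UB: "measure M (\<Union>t. Bt t) \<le> \<delta>/2" using hs(2) by simp
  have Esets: "E \<in> sets M" unfolding E_def using Btsets by auto
  have Emeas: "measure M E \<ge> 1 - \<delta>"
  proof -
    have "measure M E = 1 - measure M (\<Union>t. Bt t)"
      unfolding E_def M_def by (rule P.prob_compl) (use Btsets in \<open>auto simp: M_def\<close>)
    thus ?thesis using UB assms(8) by simp
  qed
  have main: "V t P \<pi> \<le> (1 + lam) * Vhat xs Pol (card A) (\<mu> t) t P \<pi>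
               + (5 + 1 / (2 * lam)) * (L t / (\<mu> t * (real t - 1)))"
    if xs: "xs \<in> E" and lam: "lam > 0" and t: "2 \<le> t" and \<pi>: "\<pi> \<in> Pol" and P: "P \<in> Smset Pol (ms t)"
    for xs lam t \<pi> P
  proof -
    define n where "n = real (t - 1)"
    have n: "n > 0" "real t - 1 = n" unfolding n_def using t by auto
    have mu0: "0 < \<mu> t" using sg(1)[OF t \<pi> P] unfolding \<mu>_def .
    have Zb: "\<And>x. 0 \<le> Z t P \<pi> x"
      using sg(3)[OF t \<pi> P] unfolding Z_def \<mu>_def by blast
    have Vp: "0 < V t P \<pi>" using sg(5)[OF t \<pi> P] unfolding \<mu>_def V_def .
    have nn: "0 \<le> 2*(1/\<mu> t)*V t P \<pi>*L t/n"
      using mu0 Vp Lpos[OF t] n by (intro divide_nonneg_nonneg mult_nonneg_nonneg) auto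
    define \<epsilon> where "\<epsilon> = sqrt (2*(1/\<mu> t)*V t P \<pi>*L t/n)"
    have eps2: "\<epsilon>^2 = 2*(1/\<mu> t)*V t P \<pi>*L t/n"
      unfolding \<epsilon>_def by (rule real_sqrt_pow2[OF nn])
    have eps0: "0 \<le> \<epsilon>" unfolding \<epsilon>_def by (rule real_sqrt_ge_zero[OF nn])
    define S where "S = (\<Sum>i\<in>{1..t-1}. Z t P \<pi> (xs i))"
    have "xs \<in> space M" "xs \<notin> B t \<pi> P" using xs t \<pi> P unfolding E_def Bt_def by auto
    hence "\<not> S \<le> n * V t P \<pi> - n * \<epsilon>"
      unfolding B_def S_def \<epsilon>_def n_def by auto
    hence S1: "S > n * V t P \<pi> - n * \<epsilon>" by simp
    have Vh: "Vhat xs Pol (card A) (\<mu> t) t P \<pi> = S / n"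
      unfolding Vhat_def S_def Z_def using n by simp
    have Vh0: "0 \<le> S / n" unfolding S_def using Zb n by (simp add: sum_nonneg)
    have lt: "V t P \<pi> < S / n + \<epsilon>"
    proof -
      have "n * V t P \<pi> < n * (S / n + \<epsilon>)" using S1 n by (simp add: algebra_simps)
      thus ?thesis using n by simp
    qed
    define u where "u = L t / (\<mu> t * n)"
    have u0: "0 \<le> u" unfolding u_def using Lpos[OF t] mu0 n by simp
    have w2: "\<epsilon>^2 = 2*u*V t P \<pi>" unfolding eps2 u_def using mu0 n by (simp add: field_simps)
    have "V t P \<pi> \<le> (1+lam)*(S/n) + (2 + 1/(2*lam))*u"
      by (rule alg[OF u0 Vh0 lam lt eps0 w2])
    also have "(2 + 1/(2*lam))*u \<le> (5 + 1/(2*lam))*u" using u0 by (intro mult_right_mono) auto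
    finally show ?thesis unfolding Vh u_def n(2) by simp
  qed
  show ?thesis
  proof (rule bexI[of _ E], intro conjI ballI allI impI)
    show "E \<in> sets (PiM UNIV (\<lambda>_::nat. D))" using Esets unfolding M_def .
    show "measure (PiM UNIV (\<lambda>_::nat. D)) E \<ge> 1 - \<delta>" using Emeas unfolding M_def .
    fix xs :: "nat \<Rightarrow> 'x" and lam :: real and t :: nat and \<pi> P
    assume "xs \<in> E" "0 < lam" "2 \<le> t" "\<pi> \<in> Pol" "P \<in> Smset Pol (ms t)"
    from main[OF this] show "Vval D Pol (card A) (mu (card A) (card Pol) \<delta> t) P \<pi>
                 \<le> (1 + lam) * Vhat xs Pol (card A) (mu (card A) (card Pol) \<delta> t) t P \<pi>
                   + (5 + 1 / (2 * lam)) *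
                     (((real (ms t) + 1) * ln (real (card Pol)) + ln (2 * (real t)\<^sup>2 / \<delta>))
                      / (mu (card A) (card Pol) \<delta> t * (real t - 1)))"
      unfolding V_def L_def \<mu>_def .
  qed
qed

end
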